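(* Let $G$ be a strongly connected digraph. The map $f_{\mathrm{imcor}}$ has at least one fixed point in $\operatorname{Adj}(G)$. Furthermore, $A^*\in\operatorname{Adj}(G)$ is a fixed point of $f_{\mathrm{imcor}}$ (i.e., $A^*\in f_{\mathrm{imcor}}(A^* )$) if and only if $A^*$ is weight-balanced.
   Context: A digraph $G=(V,E)$, $V=\{v_1,\dots,v_n\}$, $E\subseteq V\times V$; strongly connected means a directed path exists between every ordered pair of distinct vertices. $\operatorname{Adj}(G)$ is the set of $A=(a_{ij})\in\mathbb{R}^{n\times n}_{\geq0}$ with $a_{ij}>0$ iff $(v_i,v_j)\in E$. Imbalance: $\omega(v_i)=\sum_j a_{ji}-\sum_j a_{ij}$; $A$ is weight-balanced if all imbalances vanish. For $A\in\operatorname{Adj}(G)$, $a_i^*=\min\{a_{ik}:k\neq i,\ a_{ik}\neq0\}$ and $J_i^*=\{j\neq i: a_{ij}=a_i^*\}$. $f_{\mathrm{imcor}}(A)$ is the set of $B\in\operatorname{Adj}(G)$ such that for each $i$ there is $j_i^*\in J_i^*$ with $b_{ij}=a_{ij}+\omega(v_i)$ if $\omega(v_i)>0$ and $j=j_i^*$, and $b_{ij}=a_{ij}$ otherwise (imbalances computed w.r.t. $A$). *)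

theory Defs
  imports Main "HOL-Library.Library"
begin

definition strongly_connected :: "('v \<times> 'v) set \<Rightarrow> bool" where
  "strongly_connected E \<longleftrightarrow> (\<forall>i j. i \<noteq> j \<longrightarrow> (i, j) \<in> E\<^sup>+)"

definition Adj :: "('v \<times> 'v) set \<Rightarrow> ('v \<Rightarrow> 'v \<Rightarrow> real) set" where
  "Adj E = {A. \<forall>i j. A i j \<ge> 0 \<and> (A i j > 0 \<longleftrightarrow> (i, j) \<in> E)}"

definition imbalance :: "('v::finite \<Rightarrow> 'v \<Rightarrow> real) \<Rightarrow> 'v \<Rightarrow> real" where
  "imbalance A i = (\<Sum>j\<in>UNIV. A j i) - (\<Sum>j\<in>UNIV. A i j)"

definition weight_balanced :: "('v::finite \<Rightarrow> 'v \<Rightarrow> real) \<Rightarrow> bool" where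
  "weight_balanced A \<longleftrightarrow> (\<forall>i. imbalance A i = 0)"

definition min_out :: "('v::finite \<Rightarrow> 'v \<Rightarrow> real) \<Rightarrow> 'v \<Rightarrow> real" where
  "min_out A i = Min {A i k | k. k \<noteq> i \<and> A i k \<noteq> 0}"

definition Jstar :: "('v::finite \<Rightarrow> 'v \<Rightarrow> real) \<Rightarrow> 'v \<Rightarrow> 'v set" where
  "Jstar A i = {j. j \<noteq> i \<and> A i j = min_out A i}"

definition f_imcor :: "('v \<times> 'v) set \<Rightarrow> ('v::finite \<Rightarrow> 'v \<Rightarrow> real) \<Rightarrow> ('v \<Rightarrow> 'v \<Rightarrow> real) set" where
  "f_imcor E A = {B \<in> Adj E. \<forall>i. \<exists>j. (imbalance A i > 0 \<longrightarrow> j \<in> Jstar A i) \<and>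
      (\<forall>k. B i k = (if imbalance A i > 0 \<and> k = j then A i k + imbalance A i else A i k))}"

end

theory Submission
  imports Defs
begin

definition ind :: "'v \<Rightarrow> 'v \<Rightarrow> 'v \<Rightarrow> 'v \<Rightarrow> real" where
  "ind x y = (\<lambda>p q. if p = x \<and> q = y then 1 else 0)"

lemma imb_ind: "imbalance (ind x y :: 'v::finite \<Rightarrow> _) v = (if v = y then 1 else 0) - (if v = x then 1 else 0)"
proof -
  have h1: "(\<Sum>j\<in>UNIV. ind x y j v) = (if v = y then 1 else 0)"
    by (cases "v = y") (simp_all add: ind_def)
  have h2: "(\<Sum>j\<in>UNIV. ind x y v j) = (if v = x then 1 else 0)"
    by (cases "v = x") (simp_all add: ind_def)
  show ?thesis unfolding imbalance_def h1 h2 ..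
qed

lemma imb_add: "imbalance (\<lambda>p q. A p q + B p q :: real) (v::'v::finite) = imbalance A v + imbalance B v"
  unfolding imbalance_def by (simp add: sum.distrib)

lemma imb_sum: "imbalance (\<lambda>p q. \<Sum>e\<in>S. W e p q :: real) (v::'v::finite) = (\<Sum>e\<in>S. imbalance (W e) v)"
  unfolding imbalance_def sum_subtractf
  by (rule arg_cong2[where f="(-)"]; rule sum.swap)

lemma imb_total: "(\<Sum>v\<in>UNIV. imbalance (A::'v::finite \<Rightarrow> _) v) = 0"
proof -
  have "(\<Sum>v\<in>UNIV. \<Sum>j\<in>UNIV. A j v) = (\<Sum>v\<in>UNIV. \<Sum>j\<in>UNIV. A v j)"
    by (rule sum.swap)
  then show ?thesis unfolding imbalance_def sum_subtractf by simp
qed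

lemma path_flow:
  assumes "(a, b) \<in> E\<^sup>+"
  shows "\<exists>W::'v::finite \<Rightarrow> 'v \<Rightarrow> real. (\<forall>p q. W p q \<ge> 0 \<and> (W p q > 0 \<longrightarrow> (p,q) \<in> E)) \<and>
     (\<forall>v. imbalance W v = (if v = b then 1 else 0) - (if v = a then 1 else 0))"
  using assms
proof (induction rule: trancl_induct)
  case (base y)
  show ?case
  proof (rule exI[of _ "ind a y"], intro conjI allI)
    fix p q
    show "ind a y p q \<ge> 0" by (simp add: ind_def)
    show "ind a y p q > 0 \<longrightarrow> (p,q) \<in> E" using base by (simp add: ind_def)
  next
    fix v show "imbalance (ind a y) v = (if v = y then 1 else 0) - (if v = a then 1 else 0)"
      by (rule imb_ind)
  qed
next
  case (step y z)
  then obtain W where W: "\<forall>p q. W p q \<ge> 0 \<and> (W p q > 0 \<longrightarrow> (p,q) \<in> E)"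
    "\<forall>v. imbalance W v = (if v = y then 1 else 0) - (if v = a then 1 else 0)" by blast
  show ?case
  proof (rule exI[of _ "\<lambda>p q. W p q + ind y z p q"], intro conjI allI)
    fix p q
    have w1: "W p q \<ge> 0" and w2: "W p q > 0 \<longrightarrow> (p,q) \<in> E" using W(1) by blast+
    show "W p q + ind y z p q \<ge> 0" using w1 by (simp add: ind_def)
    show "W p q + ind y z p q > 0 \<longrightarrow> (p,q) \<in> E"
    proof (cases "p = y \<and> q = z")
      case True then show ?thesis using step(2) by simp
    next
      case False then have "ind y z p q = 0" by (simp add: ind_def)
      then show ?thesis using w2 by simp
    qed
  next
    fix v
    show "imbalance (\<lambda>p q. W p q + ind y z p q) v = (if v = z then 1 else 0) - (if v = a then 1 else 0)"
      by (simp add: imb_add imb_ind W(2))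
  qed
qed

lemma edge_flow:
  assumes sc: "strongly_connected E" and e: "(i, j) \<in> E"
  shows "\<exists>W::'v::finite \<Rightarrow> 'v \<Rightarrow> real. (\<forall>p q. W p q \<ge> 0 \<and> (W p q > 0 \<longrightarrow> (p,q) \<in> E)) \<and>
     (\<forall>v. imbalance W v = 0) \<and> W i j > 0"
proof (cases "i = j")
  case True
  show ?thesis
  proof (rule exI[of _ "ind i j"], intro conjI allI)
    fix p q
    show "ind i j p q \<ge> 0" by (simp add: ind_def)
    show "ind i j p q > 0 \<longrightarrow> (p,q) \<in> E" using e by (simp add: ind_def)
  next
    fix v show "imbalance (ind i j) v = 0" using True by (simp add: imb_ind)
  next
    show "ind i j i j > 0" by (simp add: ind_def)
  qed
next
  case False
  from sc have sc': "\<forall>x y. x \<noteq> y \<longrightarrow> (x, y) \<in> E\<^sup>+" unfolding strongly_connected_def .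
  have "j \<noteq> i" using False by simp
  then have "(j, i) \<in> E\<^sup>+" using sc' by blast
  from path_flow[OF this] obtain W :: "'v \<Rightarrow> 'v \<Rightarrow> real" where
    W: "\<forall>p q. W p q \<ge> 0 \<and> (W p q > 0 \<longrightarrow> (p,q) \<in> E)"
    "\<forall>v. imbalance W v = (if v = i then 1 else 0) - (if v = j then 1 else 0)" by blast
  show ?thesis
  proof (rule exI[of _ "\<lambda>p q. W p q + ind i j p q"], intro conjI allI)
    fix p q
    have w1: "W p q \<ge> 0" and w2: "W p q > 0 \<longrightarrow> (p,q) \<in> E" using W(1) by blast+
    show "W p q + ind i j p q \<ge> 0" using w1 by (simp add: ind_def)
    show "W p q + ind i j p q > 0 \<longrightarrow> (p,q) \<in> E"
    proof (cases "p = i \<and> q = j")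
      case True then show ?thesis using e by simp
    next
      case False then have "ind i j p q = 0" by (simp add: ind_def)
      then show ?thesis using w2 by simp
    qed
  next
    fix v
    show "imbalance (\<lambda>p q. W p q + ind i j p q) v = 0"
      by (simp add: imb_add imb_ind W(2))
  next
    have "W i j \<ge> 0" using W(1) by blast
    moreover have "ind i j i j = 1" by (simp add: ind_def)
    ultimately show "W i j + ind i j i j > 0" by simp
  qed
qed

lemma fixed_iff:
  fixes A :: "'v::finite \<Rightarrow> 'v \<Rightarrow> real"
  assumes "A \<in> Adj E"
  shows "A \<in> f_imcor E A \<longleftrightarrow> weight_balanced A"
proof
  assume "A \<in> f_imcor E A"
  then have h: "\<forall>i. \<exists>j. \<forall>k. A i k = (if imbalance A i > 0 \<and> k = j then A i k + imbalance A i else A i k)"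
    unfolding f_imcor_def by blast
  have le: "\<forall>i. imbalance A i \<le> 0"
  proof
    fix i
    obtain j where hj: "\<forall>k. A i k = (if imbalance A i > 0 \<and> k = j then A i k + imbalance A i else A i k)"
      using h by blast
    have "A i j = (if imbalance A i > 0 \<and> j = j then A i j + imbalance A i else A i j)"
      using hj by blast
    then show "imbalance A i \<le> 0" by (cases "imbalance A i > 0") auto
  qed
  have "(\<Sum>v\<in>UNIV. - imbalance A v) = 0" using imb_total[of A] by (simp add: sum_negf)
  then have "\<forall>v\<in>UNIV. - imbalance A v = 0"
    by (subst sum_nonneg_eq_0_iff[symmetric]) (use le in auto)
  then show "weight_balanced A" unfolding weight_balanced_def by simp
next
  assume "weight_balanced A"
  then show "A \<in> f_imcor E A" using assms unfolding f_imcor_def weight_balanced_def by auto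
qed

theorem lemma4p2:
  fixes E :: "('v::finite \<times> 'v) set"
  assumes "strongly_connected E"
  shows "(\<exists>A\<in>Adj E. A \<in> f_imcor E A) \<and>
         (\<forall>A\<in>Adj E. A \<in> f_imcor E A \<longleftrightarrow> weight_balanced A)"
proof
  have "\<forall>e\<in>E. \<exists>W::'v \<Rightarrow> 'v \<Rightarrow> real. (\<forall>p q. W p q \<ge> 0 \<and> (W p q > 0 \<longrightarrow> (p,q) \<in> E)) \<and>
     (\<forall>v. imbalance W v = 0) \<and> W (fst e) (snd e) > 0"
    using edge_flow[OF assms] by auto
  from bchoice[OF this] obtain W where W0: "\<forall>e\<in>E. (\<forall>p q. W e p q \<ge> 0 \<and> (W e p q > 0 \<longrightarrow> (p,q) \<in> E)) \<and>
     (\<forall>v. imbalance (W e) v = 0) \<and> W e (fst e) (snd e) > 0" by blast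
  have W: "\<And>e. e \<in> E \<Longrightarrow> (\<forall>p q. W e p q \<ge> 0 \<and> (W e p q > 0 \<longrightarrow> (p,q) \<in> E)) \<and>
     (\<forall>v. imbalance (W e) v = 0) \<and> W e (fst e) (snd e) > 0" using W0 by blast
  define A where "A = (\<lambda>p q. \<Sum>e\<in>E. W e p q)"
  have fin: "finite E" by simp
  have "A \<in> Adj E"
    unfolding Adj_def mem_Collect_eq
  proof (intro allI conjI)
    fix p q
    show "A p q \<ge> 0" unfolding A_def using W by (simp add: sum_nonneg)
    show "A p q > 0 \<longleftrightarrow> (p, q) \<in> E"
    proof
      assume "A p q > 0"
      have "\<exists>e\<in>E. W e p q \<noteq> 0"
      proof (rule ccontr)
        assume "\<not> ?thesis"
        then have "A p q = 0" unfolding A_def by simp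
        then show False using \<open>A p q > 0\<close> by simp
      qed
      then obtain e where "e \<in> E" "W e p q \<noteq> 0" by blast
      moreover from this(1) have "\<forall>p q. 0 \<le> W e p q \<and> (0 < W e p q \<longrightarrow> (p, q) \<in> E)"
        using W by blast
      ultimately show "(p,q) \<in> E" by (metis order_le_less)
    next
      assume pq: "(p,q) \<in> E"
      have "W (p,q) p q \<le> A p q" unfolding A_def
        by (rule member_le_sum) (use W pq in auto)
      moreover have "W (p,q) p q > 0" using W[OF pq] by simp
      ultimately show "A p q > 0" by linarith
    qed
  qed
  moreover have "weight_balanced A"
    unfolding weight_balanced_def A_def imb_sum using W by simp
  ultimately show "\<exists>A\<in>Adj E. A \<in> f_imcor E A" using fixed_iff by blast
next
  show "\<forall>A\<in>Adj E. A \<in> f_imcor E A \<longleftrightarrow> weight_balanced A" using fixed_iff by blast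
qed

end
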